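(* Let $W$ be a weakly symmetric discrete memoryless channel with input alphabet $\mathbb{F}_q$, with uniformly distributed input. Let $x\in\mathbb{F}_q$ be the input symbol sent, let $y$ be the corresponding (random) output, and let $\pi=\pi_y$ be the APP vector. Then $$\mathbb{E}_y(\pi(x))=\mathbb{E}_y(\|\pi\|^2),\qquad\text{where }\|\pi\|^2=\sum_{\alpha\in\mathbb{F}_q}\pi(\alpha)^2.$$
   Context: A discrete memoryless channel with transition probabilities $W(y|x)$, $x\in\mathbb{F}_q$, $y\in\mathcal{Y}$ (finite), is weakly symmetric if $\mathcal{Y}$ admits a partition $Y_1\cup\dots\cup Y_r$ such that each submatrix $(W(y|x))_{x\in\mathbb{F}_q,y\in Y_i}$ has all its rows permutations of each other and all its columns permutations of each other. With uniform input, the APP vector of output $y$ is $\pi_y(\alpha)=\mathrm{prob}(x=\alpha\mid y)=W(y|\alpha)/\sum_\beta W(y|\beta)$. The expectation $\mathbb{E}_y$ is over $y$ distributed according to $W(\cdot|x)$. *)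

theory Defs
  imports Main "HOL-Library.Disjoint_Sets" Complex_Main
begin

text \<open>A discrete memoryless channel with input alphabet 'a and finite output alphabet 'b,
  given by transition probabilities W x y = W(y|x).\<close>
definition dmc :: "('a::finite \<Rightarrow> 'b::finite \<Rightarrow> real) \<Rightarrow> bool" where
  "dmc W \<longleftrightarrow> (\<forall>x y. 0 \<le> W x y) \<and> (\<forall>x. (\<Sum>y\<in>UNIV. W x y) = 1)"

definition weakly_symmetric :: "('a::finite \<Rightarrow> 'b::finite \<Rightarrow> real) \<Rightarrow> bool" where
  "weakly_symmetric W \<longleftrightarrow>
     (\<exists>P. partition_on (UNIV :: 'b set) P \<and>
        (\<forall>B\<in>P.
           (\<forall>x x'. \<exists>\<sigma>. bij_betw \<sigma> B B \<and> (\<forall>y\<in>B. W x' y = W x (\<sigma> y))) \<and>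
           (\<forall>y\<in>B. \<forall>y'\<in>B. \<exists>\<tau>. bij \<tau> \<and> (\<forall>x. W x y' = W (\<tau> x) y))))"

text \<open>APP vector of output y under uniform input: pi_y(alpha) = W(y|alpha) / sum_beta W(y|beta).\<close>
definition app :: "('a::finite \<Rightarrow> 'b \<Rightarrow> real) \<Rightarrow> 'b \<Rightarrow> 'a \<Rightarrow> real" where
  "app W y \<alpha> = W \<alpha> y / (\<Sum>\<beta>\<in>UNIV. W \<beta> y)"

definition exp_out :: "('a \<Rightarrow> 'b::finite \<Rightarrow> real) \<Rightarrow> 'a \<Rightarrow> ('b \<Rightarrow> real) \<Rightarrow> real" where
  "exp_out W x f = (\<Sum>y\<in>UNIV. W x y * f y)"

end

theory Submission
  imports Defs
begin

lemma block_eq: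
  fixes W :: "'a::finite \<Rightarrow> 'b::finite \<Rightarrow> real" and x :: 'a and B :: "'b set"
  assumes row: "\<forall>x x'. \<exists>\<sigma>. bij_betw \<sigma> B B \<and> (\<forall>y\<in>B. W x' y = W x (\<sigma> y))"
    and col: "\<forall>y\<in>B. \<forall>y'\<in>B. \<exists>\<tau>. bij \<tau> \<and> (\<forall>x. W x y' = W (\<tau> x) y)"
    and ne: "y0 \<in> B"
  shows "(\<Sum>y\<in>B. W x y * (W x y / (\<Sum>\<beta>\<in>UNIV. W \<beta> y)))
       = (\<Sum>y\<in>B. W x y * (\<Sum>\<alpha>\<in>UNIV. (W \<alpha> y / (\<Sum>\<beta>\<in>UNIV. W \<beta> y))\<^sup>2))"
proof -
  define S where "S = (\<Sum>\<beta>\<in>UNIV. W \<beta> y0)"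
  define Q where "Q = (\<Sum>\<beta>\<in>UNIV. (W \<beta> y0)\<^sup>2)"
  have colf: "(\<Sum>\<beta>\<in>UNIV. f (W \<beta> y)) = (\<Sum>\<beta>\<in>UNIV. f (W \<beta> y0))" if yB: "y \<in> B" for y and f :: "real \<Rightarrow> real"
  proof -
    obtain \<tau> where t: "bij \<tau>" "\<forall>x. W x y = W (\<tau> x) y0" using col[rule_format, OF ne yB] by blast
    have "(\<Sum>\<beta>\<in>UNIV. f (W \<beta> y)) = (\<Sum>\<beta>\<in>UNIV. f (W (\<tau> \<beta>) y0))"
      by (rule sum.cong[OF refl], rule arg_cong[where f=f], rule t(2)[rule_format])
    also have "\<dots> = (\<Sum>\<beta>\<in>UNIV. f (W \<beta> y0))"
      using sum.reindex_bij_betw[of \<tau> UNIV UNIV "\<lambda>\<beta>. f (W \<beta> y0)"] t(1) by (simp add: bij_def)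
    finally show ?thesis .
  qed
  have Sy: "(\<Sum>\<beta>\<in>UNIV. W \<beta> y) = S" if "y \<in> B" for y
    using colf[OF that, of "\<lambda>t. t"] S_def by simp
  have Qy: "(\<Sum>\<beta>\<in>UNIV. (W \<beta> y)\<^sup>2) = Q" if "y \<in> B" for y
    using colf[OF that, of "\<lambda>t. t\<^sup>2"] Q_def by simp
  have rowf: "(\<Sum>y\<in>B. f (W x' y)) = (\<Sum>y\<in>B. f (W x y))" for x' and f :: "real \<Rightarrow> real"
  proof -
    obtain \<sigma> where s: "bij_betw \<sigma> B B" "\<forall>y\<in>B. W x' y = W x (\<sigma> y)" using row[rule_format, of x' x] by blast
    have "(\<Sum>y\<in>B. f (W x' y)) = (\<Sum>y\<in>B. f (W x (\<sigma> y)))"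
      by (rule sum.cong[OF refl], rule arg_cong[where f=f], erule s(2)[rule_format])
    also have "\<dots> = (\<Sum>y\<in>B. f (W x y))"
      using sum.reindex_bij_betw[OF s(1), of "\<lambda>y. f (W x y)"] by simp
    finally show ?thesis .
  qed
  define T where "T = (\<Sum>y\<in>B. (W x y)\<^sup>2)"
  define R where "R = (\<Sum>y\<in>B. W x y)"
  define q where "q = real (card (UNIV::'a set))"
  have qpos: "q > 0" unfolding q_def by (simp add: finite_UNIV_card_ge_0)
  have "q * T = (\<Sum>\<alpha>\<in>UNIV. \<Sum>y\<in>B. (W \<alpha> y)\<^sup>2)"
  proof -
    have "(\<Sum>\<alpha>\<in>UNIV. \<Sum>y\<in>B. (W \<alpha> y)\<^sup>2) = (\<Sum>\<alpha>\<in>(UNIV::'a set). T)"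
      unfolding T_def by (rule sum.cong[OF refl], rule rowf[where f="\<lambda>t. t\<^sup>2"])
    thus ?thesis by (simp add: q_def)
  qed
  also have "\<dots> = (\<Sum>y\<in>B. \<Sum>\<alpha>\<in>UNIV. (W \<alpha> y)\<^sup>2)" by (rule sum.swap)
  also have "\<dots> = real (card B) * Q" using Qy by simp
  finally have qT: "q * T = real (card B) * Q" .
  have "q * R = (\<Sum>\<alpha>\<in>UNIV. \<Sum>y\<in>B. W \<alpha> y)"
  proof -
    have "(\<Sum>\<alpha>\<in>UNIV. \<Sum>y\<in>B. W \<alpha> y) = (\<Sum>\<alpha>\<in>(UNIV::'a set). R)"
      unfolding R_def by (rule sum.cong[OF refl], rule rowf[where f="\<lambda>t. t"])
    thus ?thesis by (simp add: q_def)
  qed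
  also have "\<dots> = (\<Sum>y\<in>B. \<Sum>\<alpha>\<in>UNIV. W \<alpha> y)" by (rule sum.swap)
  also have "\<dots> = real (card B) * S" using Sy by simp
  finally have qR: "q * R = real (card B) * S" .
  have key: "T * S = Q * R"
  proof -
    have "q * (T * S) = q * (Q * R)" proof -
      have "q * (T * S) = (q * T) * S" by (simp only: mult.assoc)
      also have "\<dots> = real (card B) * Q * S" by (simp only: qT)
      also have "\<dots> = Q * (real (card B) * S)" by (simp only: mult_ac)
      also have "\<dots> = Q * (q * R)" by (simp only: qR)
      also have "\<dots> = q * (Q * R)" by (simp only: mult_ac)
      finally show ?thesis .
    qed
    thus ?thesis using qpos by simp
  qed
  have L: "(\<Sum>y\<in>B. W x y * (W x y / (\<Sum>\<beta>\<in>UNIV. W \<beta> y))) = T / S"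
    using Sy by (simp add: T_def sum_divide_distrib power2_eq_square)
  have "(\<Sum>y\<in>B. W x y * (\<Sum>\<alpha>\<in>UNIV. (W \<alpha> y / (\<Sum>\<beta>\<in>UNIV. W \<beta> y))\<^sup>2))
      = (\<Sum>y\<in>B. W x y * (Q / S\<^sup>2))"
    using Sy Qy by (intro sum.cong) (simp_all add: power_divide sum_divide_distrib[symmetric])
  also have "\<dots> = R * Q / S\<^sup>2" by (simp add: R_def sum_distrib_right sum_divide_distrib)
  finally have Rr: "(\<Sum>y\<in>B. W x y * (\<Sum>\<alpha>\<in>UNIV. (W \<alpha> y / (\<Sum>\<beta>\<in>UNIV. W \<beta> y))\<^sup>2)) = R * Q / S\<^sup>2" .
  show ?thesis
  proof (cases "S = 0")
    case True thus ?thesis using L Rr by simp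
  next
    case False
    have "T / S = R * Q / S\<^sup>2" using False key by (simp add: field_simps power2_eq_square)
    thus ?thesis using L Rr by simp
  qed
qed

theorem lemma1:
  fixes W :: "'a::{field,finite} \<Rightarrow> 'b::finite \<Rightarrow> real" and x :: 'a
  assumes "dmc W" and "weakly_symmetric W"
  shows "exp_out W x (\<lambda>y. app W y x) = exp_out W x (\<lambda>y. \<Sum>\<alpha>\<in>UNIV. (app W y \<alpha>)\<^sup>2)"
proof -
  obtain P where P: "partition_on (UNIV :: 'b set) P"
    and blk: "\<forall>B\<in>P.
           (\<forall>x x'. \<exists>\<sigma>. bij_betw \<sigma> B B \<and> (\<forall>y\<in>B. W x' y = W x (\<sigma> y))) \<and>
           (\<forall>y\<in>B. \<forall>y'\<in>B. \<exists>\<tau>. bij \<tau> \<and> (\<forall>x. W x y' = W (\<tau> x) y))"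
    using assms(2) unfolding weakly_symmetric_def by blast
  have U: "\<Union>P = UNIV" and D: "disjoint P" and NE: "{} \<notin> P"
    using P by (auto simp: partition_on_def)
  have fin: "finite P" by (metis U finite_UnionD finite)
  let ?f = "\<lambda>y. W x y * (W x y / (\<Sum>\<beta>\<in>UNIV. W \<beta> y))"
  let ?g = "\<lambda>y. W x y * (\<Sum>\<alpha>\<in>UNIV. (W \<alpha> y / (\<Sum>\<beta>\<in>UNIV. W \<beta> y))\<^sup>2)"
  have "sum ?f (\<Union>P) = sum (sum ?f) P"
    using sum.Union_disjoint[of P ?f] D by (auto simp: pairwise_def disjnt_def)
  also have "\<dots> = sum (sum ?g) P"
  proof -
    have "sum ?f B = sum ?g B" if BP: "B \<in> P" for B
    proof -
      obtain y0 where y0: "y0 \<in> B" using NE BP by (metis all_not_in_conv)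
      have r: "(\<forall>x x'. \<exists>\<sigma>. bij_betw \<sigma> B B \<and> (\<forall>y\<in>B. W x' y = W x (\<sigma> y)))"
        and c: "(\<forall>y\<in>B. \<forall>y'\<in>B. \<exists>\<tau>. bij \<tau> \<and> (\<forall>x. W x y' = W (\<tau> x) y))"
        using blk BP by auto
      show ?thesis by (rule block_eq[OF r c y0])
    qed
    thus ?thesis by (rule sum.cong[OF refl])
  qed
  also have "\<dots> = sum ?g (\<Union>P)"
    using sum.Union_disjoint[of P ?g] D by (auto simp: pairwise_def disjnt_def)
  finally have "sum ?f UNIV = sum ?g UNIV" unfolding U .
  thus ?thesis unfolding exp_out_def app_def .
qed

end
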